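(* Let $f=\sum_{P\in\mathcal{M}} a_P x^P$ be a nonzero real polynomial in $x_1,\ldots,x_n$, where $\mathcal{M}\subseteq\mathbb{N}^n$ is the set of exponent vectors of monomials occurring in $f$ (so $a_P\neq 0$ for $P\in\mathcal{M}$). Then for every integer $k\ge 0$, $$\dim \partial^{=k} f \geq \frac{\sum_{P \in \mathcal{M}} \binom{\sup(P)}{k}a_P^2}{|\mathcal{M}|\sum_{P \in \mathcal{M}} a_P^2}.$$
   Context: For $\alpha\in\mathbb{N}^n$, $x^\alpha = x_1^{\alpha_1}\cdots x_n^{\alpha_n}/(\alpha_1!\cdots\alpha_n!)$ (scaled monomial basis); the coefficients $a_P$ are with respect to this basis. $\sup(P)$ is the number of indices $i$ with $P_i>0$. For $\beta\in\mathbb{N}^n$, $\partial_\beta f$ is the partial derivative differentiating $\beta_i$ times with respect to $x_i$; $\partial^{=k} f$ is the real linear span of all $\partial_\beta f$ with $\beta_1+\cdots+\beta_n=k$. *)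

theory Defs
  imports Complex_Main "HOL-Library.Function_Algebras"
begin

text \<open>A real polynomial in the variables indexed by the finite type 'n is represented
by its coefficient function a :: ('n => nat) => real with respect to the scaled
monomial basis x^P = prod x_i^(P i) / P i!, with finite support.\<close>

type_synonym 'n rpoly = "('n \<Rightarrow> nat) \<Rightarrow> real"

text \<open>Partial derivative d_beta: since d_beta (x^P) = x^(P-beta) for beta <= P and 0 otherwise
in the scaled basis, the coefficient of x^Q in d_beta f is a(Q + beta).\<close>
definition pderiv_multi :: "('n \<Rightarrow> nat) \<Rightarrow> 'n rpoly \<Rightarrow> 'n rpoly" where
  "pderiv_multi \<beta> a = (\<lambda>Q. a (\<lambda>i. Q i + \<beta> i))"

definition rpoly_scale :: "real \<Rightarrow> 'n rpoly \<Rightarrow> 'n rpoly" where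
  "rpoly_scale c a = (\<lambda>Q. c * a Q)"

definition derivs_order :: "nat \<Rightarrow> ('n::finite) rpoly \<Rightarrow> 'n rpoly set" where
  "derivs_order k a = {pderiv_multi \<beta> a | \<beta>. (\<Sum>i\<in>UNIV. \<beta> i) = k}"

definition dim_derivs :: "nat \<Rightarrow> ('n::finite) rpoly \<Rightarrow> nat" where
  "dim_derivs k a = vector_space.dim rpoly_scale (derivs_order k a)"

definition supp_size :: "('n::finite \<Rightarrow> nat) \<Rightarrow> nat" where
  "supp_size P = card {i. P i > 0}"

end

theory Submission
  imports Defs "HOL-Library.FuncSet"
begin

lemma vs_rpoly: "vector_space (rpoly_scale :: real \<Rightarrow> 'n rpoly \<Rightarrow> 'n rpoly)"
  by unfold_locales (auto simp: rpoly_scale_def algebra_simps fun_eq_iff)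

lemma span_supp:
  fixes B :: "'n rpoly set"
  assumes "v \<in> module.span rpoly_scale B" "v Q \<noteq> 0"
  shows "\<exists>b\<in>B. b Q \<noteq> 0"
proof (rule ccontr)
  interpret vector_space "rpoly_scale :: real \<Rightarrow> 'n rpoly \<Rightarrow> 'n rpoly"
    by (rule vs_rpoly)
  assume H: "\<not> (\<exists>b\<in>B. b Q \<noteq> 0)"
  have "v Q = 0" using assms(1)
  proof (induct rule: span_induct_alt)
    case base then show ?case by simp
  next
    case (step c x y) then show ?case using H by (auto simp: rpoly_scale_def)
  qed
  with assms(2) show False by simp
qed

lemma finite_bounded_funs: "finite {\<beta>::'n::finite \<Rightarrow> nat. \<forall>i. \<beta> i \<le> k}"
proof -
  have "{\<beta>::'n \<Rightarrow> nat. \<forall>i. \<beta> i \<le> k} = PiE UNIV (\<lambda>_. {..k})"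
    by (auto simp: PiE_UNIV_domain)
  then show ?thesis by (simp add: finite_PiE)
qed

lemma key:
  fixes a :: "('n::finite \<Rightarrow> nat) \<Rightarrow> real" and k :: nat
  assumes fin: "finite {P. a P \<noteq> 0}" and P0: "a P0 \<noteq> 0"
  shows "supp_size P0 choose k \<le> dim_derivs k a * card {P. a P \<noteq> 0}"
proof -
  interpret vector_space "rpoly_scale :: real \<Rightarrow> 'n rpoly \<Rightarrow> 'n rpoly"
    by (rule vs_rpoly)
  define M where "M = {P. a P \<noteq> 0}"
  define G where "G = derivs_order k a"
  have "G = (\<lambda>\<beta>. pderiv_multi \<beta> a) ` {\<beta>. (\<Sum>i\<in>UNIV. \<beta> i) = k}"
    by (auto simp: G_def derivs_order_def)
  moreover have "{\<beta>::'n\<Rightarrow>nat. (\<Sum>i\<in>UNIV. \<beta> i) = k} \<subseteq> {\<beta>. \<forall>i. \<beta> i \<le> k}"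
    by (auto intro: member_le_sum)
  ultimately have finG: "finite G"
    using finite_bounded_funs finite_subset by (metis finite_imageI)
  obtain B where B: "B \<subseteq> G" "independent B" "G \<subseteq> span B" "card B = dim G"
    by (rule basis_exists)
  have finB: "finite B" using B(1) finG finite_subset by blast
  define U where "U = (\<Union>b\<in>B. {Q. b Q \<noteq> 0})"
  have cardb: "finite {Q. b Q \<noteq> 0} \<and> card {Q. b Q \<noteq> 0} \<le> card M" if bG: "b \<in> G" for b
  proof -
    obtain \<beta> where b: "b = pderiv_multi \<beta> a" using bG unfolding G_def derivs_order_def by blast
    let ?f = "\<lambda>Q::'n\<Rightarrow>nat. (\<lambda>i. Q i + \<beta> i)"
    have inj: "inj_on ?f {Q. b Q \<noteq> 0}"
      by (auto simp: inj_on_def fun_eq_iff)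
    have sub: "?f ` {Q. b Q \<noteq> 0} \<subseteq> M" by (auto simp: b M_def pderiv_multi_def)
    have "finite {Q. b Q \<noteq> 0}"
      using finite_imageD[OF finite_subset[OF sub] inj] fin M_def by blast
    moreover have "card {Q. b Q \<noteq> 0} \<le> card M"
      using card_inj_on_le[OF inj sub] fin M_def by blast
    ultimately show ?thesis by blast
  qed
  have finU: "finite U" using finB cardb B(1) by (auto simp: U_def)
  have "card U \<le> (\<Sum>b\<in>B. card {Q. b Q \<noteq> 0})"
    unfolding U_def by (rule card_UN_le[OF finB])
  also have "\<dots> \<le> (\<Sum>b\<in>B. card M)"
    by (rule sum_mono) (use cardb B(1) in blast)
  also have "\<dots> = card B * card M" by simp
  finally have cU: "card U \<le> card B * card M" .
  define T where "T = {i. P0 i > 0}"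
  define F where "F = {A. A \<subseteq> T \<and> card A = k}"
  have cF: "card F = supp_size P0 choose k"
    unfolding F_def supp_size_def T_def by (rule n_subsets) simp
  define h where "h A = (\<lambda>i. P0 i - (if i \<in> A then 1 else 0))" for A :: "'n set"
  have "inj_on h F"
  proof (rule inj_onI)
    fix A A' assume A: "A \<in> F" "A' \<in> F" "h A = h A'"
    have "i \<in> A \<longleftrightarrow> h A i < P0 i" if "A \<in> F" for A i
      using that by (auto simp: h_def F_def T_def)
    then show "A = A'" using A by auto
  qed
  moreover have "h ` F \<subseteq> U"
  proof
    fix Q assume "Q \<in> h ` F"
    then obtain A where A: "A \<in> F" "Q = h A" by blast
    define \<beta> where "\<beta> = (\<lambda>i. if i \<in> A then 1 else (0::nat))"
    have "(\<Sum>i\<in>UNIV. \<beta> i) = card A"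
      unfolding \<beta>_def by (simp add: sum.If_cases)
    then have "pderiv_multi \<beta> a \<in> G" using A by (auto simp: G_def derivs_order_def F_def)
    then have sp: "pderiv_multi \<beta> a \<in> span B" using B(3) by blast
    have "(\<lambda>i. Q i + \<beta> i) = P0"
      using A by (auto simp: fun_eq_iff h_def \<beta>_def F_def T_def)
    then have "pderiv_multi \<beta> a Q \<noteq> 0" using P0 by (simp add: pderiv_multi_def)
    from span_supp[OF sp this] show "Q \<in> U" by (auto simp: U_def)
  qed
  ultimately have "card F \<le> card U" using finU by (rule card_inj_on_le)
  then show ?thesis using cF cU B(4) by (simp add: dim_derivs_def G_def M_def)
qed

theorem theorem3:
  fixes a :: "('n::finite \<Rightarrow> nat) \<Rightarrow> real" and k :: nat
  assumes fin: "finite {P. a P \<noteq> 0}"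
    and nonzero: "{P. a P \<noteq> 0} \<noteq> {}"
  shows "real (dim_derivs k a) \<ge>
    (\<Sum>P\<in>{P. a P \<noteq> 0}. real (supp_size P choose k) * (a P)\<^sup>2) /
    (real (card {P. a P \<noteq> 0}) * (\<Sum>P\<in>{P. a P \<noteq> 0}. (a P)\<^sup>2))"
proof -
  define M where "M = {P. a P \<noteq> 0}"
  define c where "c = (\<lambda>P::'n\<Rightarrow>nat. supp_size P choose k)"
  have "Max (c ` M) \<in> c ` M" using fin nonzero M_def by simp
  then obtain P0 where P0: "P0 \<in> M" "c P0 = Max (c ` M)" by auto
  have cmax: "c P \<le> c P0" if "P \<in> M" for P
    using P0 that fin M_def by simp
  have S: "(\<Sum>P\<in>M. (a P)\<^sup>2) > 0"
    using fin nonzero M_def by (intro sum_pos) auto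
  have m: "real (card M) > 0" using fin nonzero M_def by (simp add: card_gt_0_iff)
  have N: "(\<Sum>P\<in>M. real (c P) * (a P)\<^sup>2) \<le> (\<Sum>P\<in>M. real (c P0) * (a P)\<^sup>2)"
    by (rule sum_mono) (use cmax in \<open>auto intro: mult_right_mono\<close>)
  have K: "real (c P0) \<le> real (dim_derivs k a) * real (card M)"
    using key[OF fin, of P0 k] P0(1) M_def c_def
    by (metis (mono_tags, lifting) mem_Collect_eq of_nat_le_iff of_nat_mult)
  have "(\<Sum>P\<in>M. real (c P) * (a P)\<^sup>2) / (real (card M) * (\<Sum>P\<in>M. (a P)\<^sup>2))
      \<le> (real (c P0) * (\<Sum>P\<in>M. (a P)\<^sup>2)) / (real (card M) * (\<Sum>P\<in>M. (a P)\<^sup>2))"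
    using N S m by (intro divide_right_mono) (auto simp: sum_distrib_left intro: sum_nonneg)
  also have "\<dots> = real (c P0) / real (card M)" using S by simp
  also have "\<dots> \<le> real (dim_derivs k a)" using K m by (simp add: divide_le_eq)
  finally show ?thesis by (simp add: M_def c_def)
qed

end
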